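(* Let $R_c,H,\alpha_L,\alpha_N,B,C>0$ and $0<\delta<1$. For $\lambda>0$ define, with $P_L(r_0)=\frac{1}{1+C\exp(-B(\arctan(H/r_0)-C))}$, $P_N=1-P_L$, $A_s(r_0)=(\delta(H^2+r_0^2)^{\alpha_s/2})^{1/\alpha_N}$, $B_s(r_0)=(\frac1\delta(H^2+r_0^2)^{\alpha_s/2})^{1/\alpha_N}$ ($s\in\{L,N\}$), the area fractions $\bar{C}_{\mathcal{A}_1}=\frac{2}{R_c^2}\sum_{s}\int_0^{R_c}P_s(r_0)F_{r_1|r_0}(A_s(r_0))r_0\,dr_0$ and $\bar{C}_{\mathcal{A}_3}=\frac{2}{R_c^2}\sum_{s}\int_0^{R_c}P_s(r_0)(1-F_{r_1|r_0}(B_s(r_0)))r_0\,dr_0$, where $F_{r_1|r_0}$ depends on $\lambda$ as described in the context. Then $\bar{C}_{\mathcal{A}_1}$ increases with $\lambda$ and $\bar{C}_{\mathcal{A}_3}$ decreases with $\lambda$.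
   Context: $F_{r_1|r_0}$ is the CDF of the distance $r_1$ from $x_0=(r_0,0)$, $0\le r_0\le R_c$, to the nearest point of $\Phi\setminus\{y:\|y\|\le R_c\}$, $\Phi$ a homogeneous Poisson point process of intensity $\lambda$ on $\mathbb{R}^2$: $F_{r_1|r_0}(r)=0$ for $r\le R_c-r_0$, $=1-e^{-\lambda\zeta_2(r)}$ for $R_c-r_0<r<R_c+r_0$, where $\zeta_2(r)=\pi r^2-\theta_1R_c^2+R_c^2\sin\theta_1\cos\theta_1-\theta_2r^2+r^2\sin\theta_2\cos\theta_2$, $\theta_1=\arccos\frac{R_c^2+r_0^2-r^2}{2R_cr_0}$, $\theta_2=\arccos\frac{r_0^2+r^2-R_c^2}{2r_0r}$, and $=1-e^{-\lambda(\pi r^2-\pi R_c^2)}$ otherwise. $\bar C_{\mathcal{A}_1}$ (resp. $\bar C_{\mathcal{A}_3}$) is the expected fraction of the malfunction disc whose users are served by the nearest ground base station only (resp. the UAV only). *)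

theory Defs
  imports "HOL-Analysis.Analysis"
begin

text \<open>Area function zeta_2(r) for the lens region (context), with x0 = (r0,0).\<close>
definition zeta2 :: "real \<Rightarrow> real \<Rightarrow> real \<Rightarrow> real" where
  "zeta2 Rc r0 r =
     (let th1 = arccos ((Rc^2 + r0^2 - r^2) / (2 * Rc * r0));
          th2 = arccos ((r0^2 + r^2 - Rc^2) / (2 * r0 * r))
      in pi * r^2 - th1 * Rc^2 + Rc^2 * sin th1 * cos th1
         - th2 * r^2 + r^2 * sin th2 * cos th2)"

definition F_cond :: "real \<Rightarrow> real \<Rightarrow> real \<Rightarrow> real \<Rightarrow> real" where
  "F_cond lam Rc r0 r =
     (if r \<le> Rc - r0 then 0
      else if r < Rc + r0 then 1 - exp (- lam * zeta2 Rc r0 r)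
      else 1 - exp (- lam * (pi * r^2 - pi * Rc^2)))"

definition P_L :: "real \<Rightarrow> real \<Rightarrow> real \<Rightarrow> real \<Rightarrow> real" where
  "P_L H B C r0 = 1 / (1 + C * exp (- B * (arctan (H / r0) - C)))"

definition P_N :: "real \<Rightarrow> real \<Rightarrow> real \<Rightarrow> real \<Rightarrow> real" where
  "P_N H B C r0 = 1 - P_L H B C r0"

definition A_s :: "real \<Rightarrow> real \<Rightarrow> real \<Rightarrow> real \<Rightarrow> real \<Rightarrow> real" where
  "A_s \<delta> H alpha_s alpha_N r0 = (\<delta> * (H^2 + r0^2) powr (alpha_s / 2)) powr (1 / alpha_N)"

definition B_s :: "real \<Rightarrow> real \<Rightarrow> real \<Rightarrow> real \<Rightarrow> real \<Rightarrow> real" where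
  "B_s \<delta> H alpha_s alpha_N r0 = ((1 / \<delta>) * (H^2 + r0^2) powr (alpha_s / 2)) powr (1 / alpha_N)"

definition CA1 :: "real \<Rightarrow> real \<Rightarrow> real \<Rightarrow> real \<Rightarrow> real \<Rightarrow> real \<Rightarrow> real \<Rightarrow> real \<Rightarrow> real" where
  "CA1 Rc H alpha_L alpha_N B C \<delta> lam =
     2 / Rc^2 *
       (integral {0..Rc} (\<lambda>r0. P_L H B C r0 * F_cond lam Rc r0 (A_s \<delta> H alpha_L alpha_N r0) * r0)
      + integral {0..Rc} (\<lambda>r0. P_N H B C r0 * F_cond lam Rc r0 (A_s \<delta> H alpha_N alpha_N r0) * r0))"

definition CA3 :: "real \<Rightarrow> real \<Rightarrow> real \<Rightarrow> real \<Rightarrow> real \<Rightarrow> real \<Rightarrow> real \<Rightarrow> real \<Rightarrow> real" where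
  "CA3 Rc H alpha_L alpha_N B C \<delta> lam =
     2 / Rc^2 *
       (integral {0..Rc} (\<lambda>r0. P_L H B C r0 * (1 - F_cond lam Rc r0 (B_s \<delta> H alpha_L alpha_N r0)) * r0)
      + integral {0..Rc} (\<lambda>r0. P_N H B C r0 * (1 - F_cond lam Rc r0 (B_s \<delta> H alpha_N alpha_N r0)) * r0))"

end

theory Submission
  imports Defs
begin

lemma m_nonneg:
  fixes t :: real assumes "0 \<le> t" "t \<le> pi"
  shows "0 \<le> sin t - t * cos t"
proof -
  have "(\<lambda>t. sin t - t * cos t) 0 \<le> (\<lambda>t. sin t - t * cos t) t"
  proof (rule DERIV_nonneg_imp_nondecreasing[OF assms(1)])
    fix x assume x: "0 \<le> x" "x \<le> t"
    have "DERIV (\<lambda>t. sin t - t * cos t) x :> x * sin x"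
      by (rule derivative_eq_intros refl | simp)+ 
    moreover have "0 \<le> x * sin x" using x assms by (simp add: sin_ge_zero)
    ultimately show "\<exists>y. DERIV (\<lambda>t. sin t - t * cos t) x :> y \<and> 0 \<le> y" by blast
  qed
  then show ?thesis by simp
qed

lemma kder_alg:
  fixes s c t :: real assumes "s > 0" "s^2 + c^2 = 1"
  shows "((1 - (c * 1 * c + - s * 1 * s)) * s\<^sup>2 - (t - s * c) * (of_nat 2 * (c * 1 * s ^ (2 - Suc 0)))) /
    (s\<^sup>2 * s\<^sup>2) = 2 * (s - t * c) / s ^ 3"
proof -
  have n: "(1 - (c * 1 * c + - s * 1 * s)) * s\<^sup>2 - (t - s * c) * (of_nat 2 * (c * 1 * s ^ (2 - Suc 0)))
     = 2 * s * (s - t * c)"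
  proof -
    have "(1 - (c * 1 * c + - s * 1 * s)) * s\<^sup>2 - (t - s * c) * (of_nat 2 * (c * 1 * s ^ (2 - Suc 0)))
      = (1 - c * c + s * s) * s^2 - (t - s * c) * (2 * c * s)" by simp
    also have "\<dots> = 2 * s * (s - t * c)" using assms(2) by algebra
    finally show ?thesis .
  qed
  show ?thesis unfolding n using assms(1) by (simp add: power2_eq_square power3_eq_cube)
qed
lemma k_mono:
  fixes x y :: real assumes "0 < x" "x \<le> y" "y < pi"
  shows "(x - sin x * cos x) / (sin x)^2 \<le> (y - sin y * cos y) / (sin y)^2"
proof -
  let ?k = "\<lambda>t. (t - sin t * cos t) / (sin t)^2"
  have "?k x \<le> ?k y"
  proof (rule DERIV_nonneg_imp_nondecreasing[OF assms(2)])
    fix t assume t: "x \<le> t" "t \<le> y"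
    have s: "sin t > 0" using t assms by (intro sin_gt_zero) auto
    have "DERIV ?k t :> 2*(sin t - t*cos t)/(sin t)^3"
      apply (rule derivative_eq_intros refl)+
      using s apply simp
      by (rule kder_alg) (simp_all add: s sin_cos_squared_add)
    moreover have "0 \<le> 2 * (sin t - t * cos t) / (sin t)^3"
      using m_nonneg[of t] t assms s by simp
    ultimately show "\<exists>d. DERIV ?k t :> d \<and> 0 \<le> d" by blast
  qed
  then show ?thesis by simp
qed

lemma zeta2_nonneg:
  fixes Rc r0 r :: real
  assumes d: "0 < r0" "r0 \<le> Rc" and r: "Rc - r0 < r" "r < Rc + r0"
  shows "0 \<le> zeta2 Rc r0 r"
proof -
  define a where "a = Rc"
  define c1 where "c1 = (Rc^2 + r0^2 - r^2) / (2 * Rc * r0)"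
  define c2 where "c2 = (r0^2 + r^2 - Rc^2) / (2 * r0 * r)"
  have a: "0 < Rc" using d by linarith
  have rp: "0 < r" using d r by linarith
  have "(Rc - r0)^2 < r^2" using d r by (intro power_strict_mono) auto
  hence c1u: "c1 < 1" unfolding c1_def using a d by (simp add: divide_simps power2_eq_square algebra_simps)
  have "r^2 < (Rc + r0)^2" using d r rp by (intro power_strict_mono) auto
  hence c1l: "-1 < c1" unfolding c1_def using a d by (simp add: divide_simps power2_eq_square algebra_simps)
  have "\<bar>r0 - r\<bar> < Rc" using d r rp by linarith
  hence "(r0 - r)^2 < Rc^2" by (metis abs_ge_zero power2_abs power_strict_mono zero_less_numeral)
  hence c2u: "c2 < 1" unfolding c2_def using rp d by (simp add: divide_simps power2_eq_square algebra_simps)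
  have "Rc^2 < (r0 + r)^2" using d r rp a by (intro power_strict_mono) auto
  hence c2l: "-1 < c2" unfolding c2_def using rp d by (simp add: divide_simps power2_eq_square algebra_simps)
  have "2 * Rc * r0 * r * (c1 + c2) = (Rc + r) * (r0^2 - (Rc - r)^2)"
    unfolding c1_def c2_def using a d rp by (simp add: field_simps) algebra
  moreover have "\<bar>Rc - r\<bar> < r0" using r by linarith
  hence "(Rc - r)^2 < r0^2" by (metis abs_ge_zero power2_abs power_strict_mono zero_less_numeral)
  ultimately have "0 < 2 * Rc * r0 * r * (c1 + c2)" using a rp by simp
  hence "0 < c1 + c2" using a d rp by (metis mult_pos_pos zero_less_numeral zero_less_mult_pos)
  hence cs: "-c2 \<le> c1" by linarith
  define t1 where "t1 = arccos c1"
  define t2 where "t2 = arccos c2"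
  define p where "p = pi - t2"
  have pe: "p = arccos (- c2)" unfolding p_def t2_def using c2l c2u by (simp add: arccos_minus)
  have t1b: "0 < t1" "t1 < pi" unfolding t1_def using arccos_lt_bounded[OF c1l c1u] by auto
  have pb: "0 < p" "p < pi" unfolding pe using arccos_lt_bounded[of "-c2"] c2l c2u by auto
  have t1p: "t1 \<le> p" unfolding t1_def pe using cs c2l c2u c1u by (intro arccos_le_arccos) auto
  have cos1: "cos t1 = c1" unfolding t1_def using c1l c1u by simp
  have cos2: "cos t2 = c2" unfolding t2_def using c2l c2u by simp
  have sin1: "(sin t1)^2 = 1 - c1^2" using cos1 sin_cos_squared_add[of t1] by simp
  have sin2: "(sin t2)^2 = 1 - c2^2" using cos2 sin_cos_squared_add[of t2] by simp
  have sp: "sin p = sin t2" "cos p = - cos t2" unfolding p_def by simp_all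
  have H: "Rc^2 * (1 - c1^2) = r^2 * (1 - c2^2)"
    unfolding c1_def c2_def using a d rp by (simp add: field_simps) algebra
  have s1p: "sin t1 > 0" using t1b by (intro sin_gt_zero) auto
  have spp: "sin p > 0" using pb by (intro sin_gt_zero) auto
  have K: "(t1 - sin t1 * cos t1) / (sin t1)^2 \<le> (p - sin p * cos p) / (sin p)^2"
    using k_mono[OF t1b(1) t1p pb(2)] .
  define h where "h = Rc^2 * (sin t1)^2"
  have h2: "h = r^2 * (sin p)^2" unfolding h_def using H sin1 sin2 sp by simp
  have hk: "h * ((t1 - sin t1 * cos t1) / (sin t1)^2) \<le> h * ((p - sin p * cos p) / (sin p)^2)"
    using K unfolding h_def by (intro mult_left_mono) auto
  hence "Rc^2 * (t1 - sin t1 * cos t1) \<le> r^2 * (p - sin p * cos p)"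
  proof -
    have e1: "h * ((t1 - sin t1 * cos t1) / (sin t1)^2) = Rc^2 * (t1 - sin t1 * cos t1)"
      unfolding h_def using s1p by simp
    have e2: "h * ((p - sin p * cos p) / (sin p)^2) = r^2 * (p - sin p * cos p)"
      unfolding h2 using spp by simp
    show ?thesis using e1 e2 hk by linarith
  qed
  hence "0 \<le> r^2 * (pi - t2 + sin t2 * cos t2) - Rc^2 * (t1 - sin t1 * cos t1)"
    unfolding sp unfolding p_def by simp
  moreover have "zeta2 Rc r0 r = r^2 * (pi - t2 + sin t2 * cos t2) - Rc^2 * (t1 - sin t1 * cos t1)"
    unfolding zeta2_def Let_def t1_def[symmetric] t2_def[symmetric] c1_def[symmetric] c2_def[symmetric]
    by (simp add: algebra_simps)
  ultimately show ?thesis by simp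
qed

lemma arccos_borel[measurable]: "arccos \<in> borel_measurable borel"
proof -
  have e: "arccos = (\<lambda>y. if y \<in> {-1..1} then arccos y else arccos 2)"
  proof
    fix y :: real
    show "arccos y = (if y \<in> {-1..1} then arccos y else arccos 2)"
    proof (cases "y \<in> {-1..1}")
      case False
      have "(\<lambda>x. 0 \<le> x \<and> x \<le> pi \<and> cos x = y) = (\<lambda>x. False)"
        using False cos_le_one[of] cos_ge_minus_one by (auto simp: fun_eq_iff)
      moreover have "(\<lambda>x. 0 \<le> x \<and> x \<le> pi \<and> cos x = (2::real)) = (\<lambda>x. False)"
        using cos_le_one by (auto simp: fun_eq_iff) (smt (verit) cos_le_one)
      ultimately show ?thesis using False unfolding arccos_def by simp
    qed simp
  qed
  show ?thesis
    by (subst e, rule borel_measurable_continuous_on_if) (auto intro: continuous_on_arccos')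
qed

lemma bounded_integrable:
  fixes f :: "real \<Rightarrow> real"
  assumes "f \<in> borel_measurable borel" "\<And>x. x \<in> {a..b} \<Longrightarrow> \<bar>f x\<bar> \<le> K"
  shows "f integrable_on {a..b}"
proof (rule measurable_bounded_by_integrable_imp_integrable_real[where g = "\<lambda>_. K"])
  show "f \<in> borel_measurable (lebesgue_on {a..b})"
    using assms(1) by (simp add: measurable_restrict_space1 measurable_completion)
qed (use assms in auto)

lemma arccos_meas[measurable]: "f \<in> borel_measurable M \<Longrightarrow> (\<lambda>x. arccos (f x)) \<in> borel_measurable M"
  using measurable_compose[OF _ arccos_borel] by blast
lemma measF[measurable]: assumes [measurable]: "g \<in> borel_measurable borel" shows "(\<lambda>r0. F_cond lam Rc r0 (g r0)) \<in> borel_measurable borel"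
  unfolding F_cond_def zeta2_def Let_def by measurable
lemma measA[measurable]: "(\<lambda>r0. A_s \<delta> H al aN r0) \<in> borel_measurable borel"
  unfolding A_s_def by measurable
lemma measB[measurable]: "(\<lambda>r0. B_s \<delta> H al aN r0) \<in> borel_measurable borel"
  unfolding B_s_def by measurable
lemma measPL[measurable]: "(\<lambda>r0. P_L H B C r0) \<in> borel_measurable borel"
  unfolding P_L_def by measurable
lemma measPN[measurable]: "(\<lambda>r0. P_N H B C r0) \<in> borel_measurable borel"
  unfolding P_N_def by measurable

lemma P_L_bounds:
  assumes "C > 0" shows "0 \<le> P_L H B C r0 \<and> P_L H B C r0 \<le> 1"
proof -
  have "1 \<le> 1 + C * exp (- B * (arctan (H / r0) - C))" using assms by simp
  thus ?thesis unfolding P_L_def by simp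
qed

lemma P_N_bounds:
  assumes "C > 0" shows "0 \<le> P_N H B C r0 \<and> P_N H B C r0 \<le> 1"
  using P_L_bounds[OF assms, of H B r0] unfolding P_N_def by simp

lemma F_props:
  assumes "0 \<le> lam" "lam \<le> lam'" "0 \<le> r0" "r0 \<le> Rc" "0 < Rc"
  shows "0 \<le> F_cond lam Rc r0 r \<and> F_cond lam Rc r0 r \<le> 1 \<and> F_cond lam Rc r0 r \<le> F_cond lam' Rc r0 r"
proof (cases "r \<le> Rc - r0")
  case True thus ?thesis unfolding F_cond_def by simp
next
  case n1: False
  show ?thesis
  proof (cases "r < Rc + r0")
    case True
    have "0 < r0" using n1 True by linarith
    hence z: "0 \<le> zeta2 Rc r0 r" using zeta2_nonneg[of r0 Rc r] n1 True assms by linarith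
    have "exp (- lam' * zeta2 Rc r0 r) \<le> exp (- lam * zeta2 Rc r0 r)"
      using z assms by (simp add: mult_right_mono)
    moreover have "exp (- lam * zeta2 Rc r0 r) \<le> 1" using z assms by (simp add: mult_nonneg_nonneg)
    ultimately show ?thesis using n1 True unfolding F_cond_def by simp
  next
    case False
    have "Rc \<le> r" using False assms by linarith
    hence "Rc^2 \<le> r^2" using assms by (intro power_mono) auto
    hence z: "0 \<le> pi * r^2 - pi * Rc^2" by simp
    have "exp (- lam' * (pi * r^2 - pi * Rc^2)) \<le> exp (- lam * (pi * r^2 - pi * Rc^2))"
      using z assms by (simp add: mult_right_mono)
    moreover have "exp (- lam * (pi * r^2 - pi * Rc^2)) \<le> 1" using z assms by (simp add: mult_nonneg_nonneg)
    ultimately show ?thesis using n1 False unfolding F_cond_def by simp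
  qed
qed

lemma int_mono:
  fixes p g :: "real \<Rightarrow> real"
  assumes [measurable]: "p \<in> borel_measurable borel" "g \<in> borel_measurable borel"
    and pb: "\<And>x. 0 \<le> p x \<and> p x \<le> 1"
    and l: "0 \<le> lam" "lam \<le> lam'" and Rc: "0 < Rc"
  shows "integral {0..Rc} (\<lambda>r0. p r0 * F_cond lam Rc r0 (g r0) * r0)
       \<le> integral {0..Rc} (\<lambda>r0. p r0 * F_cond lam' Rc r0 (g r0) * r0)"
    and "integral {0..Rc} (\<lambda>r0. p r0 * (1 - F_cond lam' Rc r0 (g r0)) * r0)
       \<le> integral {0..Rc} (\<lambda>r0. p r0 * (1 - F_cond lam Rc r0 (g r0)) * r0)"
proof -
  have Fb: "0 \<le> F_cond mu Rc r0 (g r0) \<and> F_cond mu Rc r0 (g r0) \<le> 1"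
    if "0 \<le> mu" "r0 \<in> {0..Rc}" for mu r0 using F_props[of mu mu r0 Rc] that Rc by auto
  have bnd: "\<bar>p r0 * F_cond mu Rc r0 (g r0) * r0\<bar> \<le> Rc \<and> \<bar>p r0 * (1 - F_cond mu Rc r0 (g r0)) * r0\<bar> \<le> Rc"
    if "0 \<le> mu" "r0 \<in> {0..Rc}" for mu r0
  proof -
    have a: "0 \<le> p r0" "p r0 \<le> 1" using pb[of r0] by auto
    have b: "0 \<le> F_cond mu Rc r0 (g r0)" "F_cond mu Rc r0 (g r0) \<le> 1" using Fb[OF that] by auto
    have c: "0 \<le> r0" "r0 \<le> Rc" using that by auto
    have u1: "0 \<le> p r0 * F_cond mu Rc r0 (g r0)" "p r0 * F_cond mu Rc r0 (g r0) \<le> 1"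
      using a b by (simp_all add: mult_le_one)
    have u2: "0 \<le> p r0 * (1 - F_cond mu Rc r0 (g r0))" "p r0 * (1 - F_cond mu Rc r0 (g r0)) \<le> 1"
      using a b by (simp_all add: mult_le_one)
    have "p r0 * F_cond mu Rc r0 (g r0) * r0 \<le> 1 * Rc" using u1 c by (intro mult_mono) auto
    moreover have "p r0 * (1 - F_cond mu Rc r0 (g r0)) * r0 \<le> 1 * Rc" using u2 c by (intro mult_mono) auto
    ultimately show ?thesis using u1 u2 c by simp
  qed
  have i1: "(\<lambda>r0. p r0 * F_cond mu Rc r0 (g r0) * r0) integrable_on {0..Rc}"
    and i2: "(\<lambda>r0. p r0 * (1 - F_cond mu Rc r0 (g r0)) * r0) integrable_on {0..Rc}"
    if "0 \<le> mu" for mu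
    using bnd[OF that] by (auto intro!: bounded_integrable[where K = Rc])
  have pt: "F_cond lam Rc r0 (g r0) \<le> F_cond lam' Rc r0 (g r0)" if "r0 \<in> {0..Rc}" for r0
    using F_props[of lam lam' r0 Rc] that l Rc by auto
  show "integral {0..Rc} (\<lambda>r0. p r0 * F_cond lam Rc r0 (g r0) * r0)
       \<le> integral {0..Rc} (\<lambda>r0. p r0 * F_cond lam' Rc r0 (g r0) * r0)"
    using l pt pb by (intro integral_le i1) (auto intro!: mult_right_mono mult_left_mono)
  show "integral {0..Rc} (\<lambda>r0. p r0 * (1 - F_cond lam' Rc r0 (g r0)) * r0)
       \<le> integral {0..Rc} (\<lambda>r0. p r0 * (1 - F_cond lam Rc r0 (g r0)) * r0)"
    using l pt pb by (intro integral_le i2) (auto intro!: mult_right_mono mult_left_mono)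
qed

theorem corollary2:
  fixes Rc H alpha_L alpha_N B C \<delta> :: real
  assumes "Rc > 0" "H > 0" "alpha_L > 0" "alpha_N > 0" "B > 0" "C > 0"
    and "0 < \<delta>" "\<delta> < 1"
  shows "mono_on {0<..} (CA1 Rc H alpha_L alpha_N B C \<delta>)
       \<and> antimono_on {0<..} (CA3 Rc H alpha_L alpha_N B C \<delta>)"
proof
  have c: "0 \<le> 2 / Rc^2" by simp
  show "mono_on {0<..} (CA1 Rc H alpha_L alpha_N B C \<delta>)"
  proof (rule mono_onI)
    fix x y :: real assume xy: "x \<in> {0<..}" "y \<in> {0<..}" "x \<le> y"
    show "CA1 Rc H alpha_L alpha_N B C \<delta> x \<le> CA1 Rc H alpha_L alpha_N B C \<delta> y"
      unfolding CA1_def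
      using xy assms P_L_bounds[OF assms(6)] P_N_bounds[OF assms(6)]
      by (intro mult_left_mono[OF _ c] add_mono int_mono(1) measPL measPN measA measB) auto
  qed
  show "antimono_on {0<..} (CA3 Rc H alpha_L alpha_N B C \<delta>)"
  proof (rule monotone_onI)
    fix x y :: real assume xy: "x \<in> {0<..}" "y \<in> {0<..}" "x \<le> y"
    show "CA3 Rc H alpha_L alpha_N B C \<delta> x \<ge> CA3 Rc H alpha_L alpha_N B C \<delta> y"
      unfolding CA3_def
      using xy assms P_L_bounds[OF assms(6)] P_N_bounds[OF assms(6)]
      by (intro mult_left_mono[OF _ c] add_mono int_mono(2) measPL measPN measA measB) auto
  qed
qed

end
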